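(* Consider a sealed-bid first-price common-value auction with limit price $L\ge 0$ for a single good whose common value $v$ has CDF $F_v$, density $f_v$, support $\mathbb{R}_+$ and finite mean, with $\mathbb{E}[v]>L$ and with $\underline v$ in the support of $F_v$ satisfying $L=\mathbb{E}[\tilde v\mid\tilde v<\underline v]$ ($\tilde v\sim F_v$). There are $n\ge 2$ bidders: $n-1$ of them bid in period 1, knowing only $F_v$; then $v$ is realized and the remaining (period-2) bidder observes $v$ (but no other bids) and bids. The highest bid wins, the winner pays their bid and gets $v$ minus the bid; if the highest bid is strictly below $L$ the good is unsold. The period-2 bidder wins any tie with a period-1 bidder and can win with a bid equal to $L$; a winning bid from a period-1 bidder that equals exactly $L$ results in no sale. Let $$\beta_L(v)=\begin{cases}\mathbb{E}[\tilde v\mid \tilde v<v] & v\ge \underline v,\\ L & L<v<\underline v,\\ 0 & v\le L.\end{cases}$$ Then any profile in which the period-2 bidder bids $\beta_L(v)$ and the $n-1$ period-1 bidders use (mixed) strategies such that the maximum of their bids has the same distribution as $\beta_L(v')$ with $v'\sim F_v$, is an equilibrium.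
   Context: Bidders are risk neutral; equilibrium means perfect Bayesian Nash equilibrium. *)

theory Defs
  imports "HOL-Probability.Probability"
begin

definition vdist :: "(real \<Rightarrow> real) \<Rightarrow> real measure" where
  "vdist f = density lborel (\<lambda>x. ennreal (f x))"

definition measure_support :: "real measure \<Rightarrow> real set" where
  "measure_support M = {x. \<forall>e>0. emeasure M (ball x e) > 0}"

text \<open>E[v | v < w]; uses the HOL convention x/0 = 0 when P(v<w) = 0.\<close>
definition cond_exp_below :: "real measure \<Rightarrow> real \<Rightarrow> real" where
  "cond_exp_below M w = set_lebesgue_integral M {..<w} (\<lambda>t. t) / measure M {..<w}"

definition beta_L :: "real measure \<Rightarrow> real \<Rightarrow> real \<Rightarrow> real \<Rightarrow> real" where
  "beta_L M L vlow v =
     (if vlow \<le> v then cond_exp_below M v else if L < v then L else 0)"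

definition bid_strategy :: "real measure \<Rightarrow> bool" where
  "bid_strategy \<tau> \<longleftrightarrow> prob_space \<tau> \<and> sets \<tau> = sets borel \<and> emeasure \<tau> {0..} = 1"

text \<open>The period-2 bidder wins ties with period-1 bidders; a period-1 winning bid equal to L
  (or below L) means no sale; ties among period-1 bidders are broken uniformly at random.\<close>
definition p1_payoff :: "nat set \<Rightarrow> real \<Rightarrow> (real \<Rightarrow> real) \<Rightarrow> nat \<Rightarrow> (nat \<Rightarrow> real) \<Rightarrow> real \<Rightarrow> real" where
  "p1_payoff I L b2 i b v =
     (if L < b i \<and> b2 v < b i \<and> (\<forall>j\<in>I. b j \<le> b i)
      then (v - b i) / real (card {j\<in>I. b j = b i}) else 0)"

definition p2_payoff :: "nat set \<Rightarrow> real \<Rightarrow> real \<Rightarrow> (nat \<Rightarrow> real) \<Rightarrow> real \<Rightarrow> real" where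
  "p2_payoff I L x b v = (if L \<le> x \<and> (\<forall>j\<in>I. b j \<le> x) then v - x else 0)"

text \<open>The period-2 bidder observes only v, so her belief about period-1 bids is the prior;
  sequential rationality is required at every value v in the support.
  Period-1 deviations to any mixed strategy are considered; a deviation whose expected
  payoff is not integrable has expected payoff -infinity (payoffs are bounded above by
  an integrable function) and hence is never profitable.\<close>
definition is_equilibrium ::
  "real measure \<Rightarrow> real \<Rightarrow> nat \<Rightarrow> (nat \<Rightarrow> real measure) \<Rightarrow> (real \<Rightarrow> real) \<Rightarrow> bool" where
  "is_equilibrium M L n \<sigma> b2 \<longleftrightarrow>
     (let I = {0..<n-1} in
       (\<forall>i\<in>I. bid_strategy (\<sigma> i)) \<and>
       b2 \<in> borel_measurable borel \<and> (\<forall>v. 0 \<le> b2 v) \<and>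
       (\<forall>v\<in>measure_support M. \<forall>x\<ge>0.
          integral\<^sup>L (PiM I \<sigma>) (\<lambda>b. p2_payoff I L x b v)
            \<le> integral\<^sup>L (PiM I \<sigma>) (\<lambda>b. p2_payoff I L (b2 v) b v)) \<and>
       (\<forall>i\<in>I.
          integrable (PiM I \<sigma> \<Otimes>\<^sub>M M) (\<lambda>(b, v). p1_payoff I L b2 i b v) \<and>
          (\<forall>\<tau>. bid_strategy \<tau> \<longrightarrow>
             integrable (PiM I (\<sigma>(i := \<tau>)) \<Otimes>\<^sub>M M) (\<lambda>(b, v). p1_payoff I L b2 i b v) \<longrightarrow>
             integral\<^sup>L (PiM I (\<sigma>(i := \<tau>)) \<Otimes>\<^sub>M M) (\<lambda>(b, v). p1_payoff I L b2 i b v)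
               \<le> integral\<^sup>L (PiM I \<sigma> \<Otimes>\<^sub>M M) (\<lambda>(b, v). p1_payoff I L b2 i b v))))"

end

theory Submission
  imports Defs
begin


locale vsetting = prob_space M for M :: "real measure" +
  fixes L vlow :: real
  assumes sets_M: "sets M = sets borel"
  and noatom: "\<And>x. measure M {x} = 0"
  and neg0: "measure M {..<0} = 0"
  and pos: "\<And>a b. 0 \<le> a \<Longrightarrow> a < b \<Longrightarrow> 0 < measure M {a<..<b}"
  and intM: "integrable M (\<lambda>x. x)"
  and L0: "0 \<le> L"
  and vlow0: "0 \<le> vlow"
  and Ldef: "L = cond_exp_below M vlow"
begin

definition F where "F w = measure M {..<w}"
definition A where "A w = (\<integral>s. indicator {..<w} s * s \<partial>M)"
abbreviation \<beta> where "\<beta> \<equiv> beta_L M L vlow"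

lemma space_M: "space M = UNIV"
  using sets_eq_imp_space_eq[OF sets_M] by simp

lemma sM[measurable]: "X \<in> sets borel \<Longrightarrow> X \<in> sets M"
  using sets_M by simp

lemma meas_M[measurable]: "f \<in> borel_measurable borel \<Longrightarrow> f \<in> borel_measurable M"
  using measurable_cong_sets[OF sets_M refl] by blast

lemma intI: "S \<in> sets borel \<Longrightarrow> integrable M (\<lambda>s. indicator S s * s)"
  using integrable_real_mult_indicator[of S M "\<lambda>x. x"] intM by (simp add: mult.commute)

lemma intC: "S \<in> sets borel \<Longrightarrow> integrable M (\<lambda>s. indicator S s * (c::real))"
  using integrable_real_mult_indicator[of S M "\<lambda>_. c"] by (simp add: mult.commute)

lemma intCI: "S \<in> sets borel \<Longrightarrow> (\<integral>s. indicator S s * (c::real) \<partial>M) = c * measure M S"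
  by (simp add: space_M mult.commute)

lemma F_le: "F w = measure M {..w}"
proof -
  have "{..w} = {..<w} \<union> {w}" by auto
  hence "measure M {..w} = measure M {..<w} + measure M {w}"
    using finite_measure_Union[of "{..<w}" "{w}"] by simp
  thus ?thesis by (simp add: F_def noatom)
qed

lemma F_diff: "a \<le> b \<Longrightarrow> measure M {a..<b} = F b - F a"
proof -
  assume "a \<le> b"
  hence "{a..<b} = {..<b} - {..<a}" by auto
  moreover have "measure M ({..<b} - {..<a}) = F b - F a"
    unfolding F_def using \<open>a \<le> b\<close> by (subst finite_measure_Diff) auto
  ultimately show ?thesis by simp
qed

lemma F_mono: "a \<le> b \<Longrightarrow> F a \<le> F b"
  unfolding F_def by (intro finite_measure_mono) auto

lemma F_nonneg: "0 \<le> F w" unfolding F_def by simp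
lemma F_le1: "F w \<le> 1" unfolding F_def by simp

lemma F_zero: "w \<le> 0 \<Longrightarrow> F w = 0"
  using F_mono[of w 0] F_nonneg[of w] neg0 unfolding F_def by (metis order_antisym)

lemma open_pos: "0 \<le> a \<Longrightarrow> a < b \<Longrightarrow> 0 < measure M {a..<b}"
  using pos[of a b] finite_measure_mono[of "{a<..<b}" "{a..<b}"] by fastforce

lemma F_pos: "0 < w \<Longrightarrow> 0 < F w"
  using open_pos[of 0 w] F_diff[of 0 w] F_zero[of 0] by simp

lemma F_cont: "isCont F w"
proof -
  interpret finite_borel_measure M by standard (rule sets_M)
  have "isCont (cdf M) w" using isCont_cdf noatom by simp
  moreover have "cdf M = F" using F_le by (auto simp: cdf_def)
  ultimately show ?thesis by simp
qed

lemma F_top: "(F \<longlongrightarrow> 1) at_top"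
proof -
  interpret real_distribution M by standard (rule sets_M)
  have "cdf M = F" using F_le by (auto simp: cdf_def)
  thus ?thesis using cdf_lim_at_top_prob by simp
qed

lemma AE_nonneg: "AE s in M. 0 \<le> s"
proof -
  have "emeasure M {..<0} = 0" using neg0 by (simp add: emeasure_eq_measure)
  thus ?thesis by (intro AE_I[of _ _ "{..<0}"]) (auto simp: space_M)
qed

lemma A_diff: "a \<le> b \<Longrightarrow> A b - A a = (\<integral>s. indicator {a..<b} s * s \<partial>M)"
proof -
  assume ab: "a \<le> b"
  have "A b - A a = (\<integral>s. indicator {..<b} s * s - indicator {..<a} s * s \<partial>M)"
    unfolding A_def by (simp add: Bochner_Integration.integral_diff[OF intI intI])
  also have "\<dots> = (\<integral>s. indicator {a..<b} s * s \<partial>M)"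
    using ab by (intro Bochner_Integration.integral_cong) (auto simp: indicator_def)
  finally show ?thesis .
qed

lemma A_bounds: "a \<le> b \<Longrightarrow> a * (F b - F a) \<le> A b - A a \<and> A b - A a \<le> b * (F b - F a)"
proof -
  assume ab: "a \<le> b"
  have "a * (F b - F a) = (\<integral>s. indicator {a..<b} s * a \<partial>M)"
    using F_diff[OF ab] by (simp add: intCI)
  also have "\<dots> \<le> (\<integral>s. indicator {a..<b} s * s \<partial>M)"
    by (intro integral_mono intI intC) (auto simp: indicator_def)
  finally have 1: "a * (F b - F a) \<le> A b - A a" using A_diff[OF ab] by simp
  have "(\<integral>s. indicator {a..<b} s * s \<partial>M) \<le> (\<integral>s. indicator {a..<b} s * b \<partial>M)"
    by (intro integral_mono intI intC) (auto simp: indicator_def)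
  also have "\<dots> = b * (F b - F a)"
    using F_diff[OF ab] by (simp add: intCI)
  finally show ?thesis using 1 A_diff[OF ab] by simp
qed

lemma A_strict: "0 \<le> a \<Longrightarrow> a < b \<Longrightarrow> a * (F b - F a) < A b - A a"
proof -
  assume a0: "0 \<le> a" and ab: "a < b"
  define m where "m = (a + b) / 2"
  have am: "a < m" "m < b" using ab by (auto simp: m_def)
  have "a * (F b - F a) < a * (F b - F a) + (m - a) * measure M {m..<b}"
    using open_pos[of m b] am a0 by simp
  also have "\<dots> = (\<integral>s. indicator {a..<b} s * a \<partial>M) + (\<integral>s. indicator {m..<b} s * (m - a) \<partial>M)"
    using F_diff[of a b] ab by (simp add: intCI)
  also have "\<dots> = (\<integral>s. indicator {a..<b} s * a + indicator {m..<b} s * (m - a) \<partial>M)"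
    by (simp add: Bochner_Integration.integral_add[OF intC intC])
  also have "\<dots> \<le> (\<integral>s. indicator {a..<b} s * s \<partial>M)"
    using am by (intro integral_mono intI Bochner_Integration.integrable_add intC) (auto simp: indicator_def)
  finally show ?thesis using A_diff[of a b] ab by simp
qed

lemma A_nonneg: "0 \<le> A w"
  unfolding A_def using AE_nonneg by (intro integral_nonneg_AE) (auto elim: AE_mp)

lemma A_le: "A w \<le> w * F w"
proof -
  have "A w \<le> (\<integral>s. indicator {..<w} s * w \<partial>M)"
    unfolding A_def by (intro integral_mono intI intC) (auto simp: indicator_def)
  thus ?thesis by (simp add: intCI F_def mult.commute)
qed

lemma A_zero: "w \<le> 0 \<Longrightarrow> A w = 0"
  using A_le[of w] A_nonneg[of w] F_zero[of w] by simp

lemma A_lip0: "w \<le> t \<Longrightarrow> \<bar>A t - A w\<bar> \<le> (\<bar>t\<bar> + \<bar>w\<bar>) * \<bar>F t - F w\<bar>"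
proof -
  assume wt: "w \<le> t"
  define D where "D = F t - F w"
  have D0: "0 \<le> D" using F_mono[OF wt] by (simp add: D_def)
  have b: "w * D \<le> A t - A w" "A t - A w \<le> t * D" using A_bounds[OF wt] by (auto simp: D_def)
  have "- \<bar>w\<bar> * D \<le> w * D" using D0 by (intro mult_right_mono) auto
  moreover have "t * D \<le> \<bar>t\<bar> * D" using D0 by (intro mult_right_mono) auto
  moreover have "0 \<le> \<bar>t\<bar> * D" "0 \<le> \<bar>w\<bar> * D" using D0 by auto
  ultimately have "\<bar>A t - A w\<bar> \<le> (\<bar>t\<bar> + \<bar>w\<bar>) * D" using b by (simp add: abs_le_iff algebra_simps)
  thus ?thesis using D0 by (simp add: D_def)
qed

lemma A_lip: "\<bar>A t - A w\<bar> \<le> (\<bar>t\<bar> + \<bar>w\<bar>) * \<bar>F t - F w\<bar>"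
proof (cases "w \<le> t")
  case True thus ?thesis by (rule A_lip0)
next
  case False
  hence "\<bar>A w - A t\<bar> \<le> (\<bar>w\<bar> + \<bar>t\<bar>) * \<bar>F w - F t\<bar>" by (intro A_lip0) simp
  thus ?thesis by (simp add: abs_minus_commute add.commute)
qed

lemma A_cont: "isCont A w"
proof -
  have "((\<lambda>t. (\<bar>t\<bar> + \<bar>w\<bar>) * \<bar>F t - F w\<bar>) \<longlongrightarrow> (\<bar>w\<bar> + \<bar>w\<bar>) * \<bar>F w - F w\<bar>) (at w)"
    using F_cont[of w] unfolding isCont_def by (intro tendsto_intros) auto
  hence "((\<lambda>t. (\<bar>t\<bar> + \<bar>w\<bar>) * \<bar>F t - F w\<bar>) \<longlongrightarrow> 0) (at w)" by simp
  hence "((\<lambda>t. A t - A w) \<longlongrightarrow> 0) (at w)"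
    by (rule Lim_null_comparison[rotated]) (auto simp: A_lip)
  thus ?thesis unfolding isCont_def by (rule LIM_zero_cancel)
qed

lemma A_top: "(A \<longlongrightarrow> integral\<^sup>L M (\<lambda>s. s)) at_top"
  unfolding A_def
proof (rule integral_dominated_convergence_at_top[where w="\<lambda>s. \<bar>s\<bar>"])
  show "integrable M (\<lambda>s. \<bar>s\<bar>)" using intM by simp
  show "AE x in M. ((\<lambda>i. indicator {..<i} x * x) \<longlongrightarrow> x) at_top"
  proof (intro AE_I2)
    fix x :: real
    have "\<forall>\<^sub>F i in at_top. indicator {..<i} x * x = x"
      using eventually_gt_at_top[of x] by eventually_elim auto
    thus "((\<lambda>i. indicator {..<i} x * x) \<longlongrightarrow> x) at_top"
      by (rule tendsto_eventually)
  qed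
  show "\<forall>\<^sub>F i in at_top. AE x in M. norm (indicator {..<i} x * x) \<le> \<bar>x\<bar>"
    by (auto simp: indicator_def)
qed auto

definition \<beta>0 where "\<beta>0 w = cond_exp_below M w"

lemma \<beta>0_eq: "\<beta>0 w = A w / F w"
  unfolding \<beta>0_def cond_exp_below_def set_lebesgue_integral_def A_def F_def by simp

lemma \<beta>0_nonneg: "0 \<le> \<beta>0 w"
  unfolding \<beta>0_eq using A_nonneg F_nonneg by simp

lemma \<beta>0_zero: "w \<le> 0 \<Longrightarrow> \<beta>0 w = 0"
  unfolding \<beta>0_eq using F_zero by simp

lemma \<beta>0_le: "0 \<le> w \<Longrightarrow> \<beta>0 w \<le> w"
proof (cases "w = 0")
  case False
  assume "0 \<le> w"
  hence "0 < F w" using False F_pos by simp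
  thus ?thesis unfolding \<beta>0_eq using A_le[of w] by (simp add: divide_le_eq)
qed (simp add: \<beta>0_zero)

lemma A_eq: "A w = \<beta>0 w * F w"
proof (cases "w \<le> 0")
  case True thus ?thesis using A_zero \<beta>0_zero by simp
next
  case False thus ?thesis using F_pos[of w] unfolding \<beta>0_eq by simp
qed

lemma \<beta>0_strict: "0 \<le> a \<Longrightarrow> a < b \<Longrightarrow> \<beta>0 a < \<beta>0 b"
proof -
  assume a0: "0 \<le> a" and ab: "a < b"
  have Fb: "0 < F b" using F_pos ab a0 by simp
  show ?thesis
  proof (cases "a = 0")
    case True
    have "0 < A b" using A_strict[of 0 b] ab True A_zero[of 0] by simp
    thus ?thesis using True Fb F_zero[of 0] unfolding \<beta>0_eq by simp
  next
    case False
    hence Fa: "0 < F a" using F_pos a0 by simp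
    have s: "a * (F b - F a) < A b - A a" using A_strict a0 ab by simp
    have "A a \<le> a * F a" by (rule A_le)
    have m: "F a \<le> F b" using F_mono ab by simp
    have "A a * F b = A a * F a + A a * (F b - F a)" by (simp add: algebra_simps)
    also have "\<dots> \<le> A a * F a + a * F a * (F b - F a)"
      using \<open>A a \<le> a * F a\<close> m by (simp add: mult_right_mono)
    also have "\<dots> < A a * F a + (A b - A a) * F a"
    proof -
      have "a * F a * (F b - F a) = a * (F b - F a) * F a" by (simp add: mult_ac)
      thus ?thesis using mult_strict_right_mono[OF s Fa] by linarith
    qed
    also have "\<dots> = A b * F a" by (simp add: algebra_simps)
    finally have "A a * F b < A b * F a" .
    thus ?thesis unfolding \<beta>0_eq using Fa Fb by (simp add: divide_less_eq less_divide_eq field_simps)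
  qed
qed

lemma \<beta>0_mono: "a \<le> b \<Longrightarrow> \<beta>0 a \<le> \<beta>0 b"
proof -
  assume ab: "a \<le> b"
  show ?thesis
  proof (cases "a \<le> 0")
    case True thus ?thesis using \<beta>0_zero \<beta>0_nonneg by simp
  next
    case False thus ?thesis using \<beta>0_strict[of a b] ab by (cases "a = b") auto
  qed
qed

lemma \<beta>0_cont: "0 < w \<Longrightarrow> isCont \<beta>0 w"
proof -
  assume "0 < w"
  hence "F w \<noteq> 0" using F_pos by (metis less_irrefl)
  hence "isCont (\<lambda>w. A w / F w) w" using A_cont F_cont by (intro continuous_intros) auto
  thus ?thesis unfolding \<beta>0_eq[abs_def] by simp
qed

lemma \<beta>_def': "\<beta> v = (if vlow \<le> v then \<beta>0 v else if L < v then L else 0)"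
  unfolding beta_L_def \<beta>0_def by simp

lemma \<beta>_vlow: "\<beta> vlow = L"
  unfolding \<beta>_def' \<beta>0_def using Ldef by simp

lemma L_le_vlow: "L \<le> vlow"
  using \<beta>0_le[OF vlow0] Ldef unfolding \<beta>0_def by simp

lemma L0_vlow: "L = 0 \<Longrightarrow> vlow = 0"
proof (rule ccontr)
  assume "L = 0" "vlow \<noteq> 0"
  hence "0 < vlow" using vlow0 by simp
  hence "\<beta>0 0 < \<beta>0 vlow" by (intro \<beta>0_strict) auto
  thus False using \<beta>0_zero[of 0] Ldef \<open>L = 0\<close> unfolding \<beta>0_def by simp
qed

lemma \<beta>_below: "v < vlow \<Longrightarrow> \<beta> v \<le> L"
  unfolding \<beta>_def' using L0 by auto

lemma \<beta>_nonneg: "0 \<le> \<beta> v"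
  unfolding \<beta>_def' using L0 \<beta>0_nonneg by auto

lemma \<beta>_le_abs: "\<beta> v \<le> \<bar>v\<bar>"
  unfolding \<beta>_def' using \<beta>0_le vlow0 by auto

lemma \<beta>_ge: "vlow \<le> v \<Longrightarrow> L \<le> \<beta> v"
  unfolding \<beta>_def' using \<beta>0_mono[of vlow v] Ldef unfolding \<beta>0_def by auto

lemma \<beta>_mono: "a \<le> b \<Longrightarrow> \<beta> a \<le> \<beta> b"
proof -
  assume ab: "a \<le> b"
  show ?thesis
  proof (cases "vlow \<le> a")
    case True thus ?thesis using ab \<beta>0_mono[OF ab] unfolding \<beta>_def' by auto
  next
    case False
    show ?thesis
    proof (cases "vlow \<le> b")
      case True thus ?thesis using \<beta>_below[of a] False \<beta>_ge[of b] by simp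
    next
      case F2: False thus ?thesis using False ab L0 unfolding \<beta>_def' by auto
    qed
  qed
qed

lemma \<beta>_mono': "mono \<beta>" using \<beta>_mono by (auto simp: mono_def)

lemma \<beta>_meas[measurable]: "\<beta> \<in> borel_measurable borel"
  using borel_measurable_mono[OF \<beta>_mono'] .

lemma \<beta>_strict: "vlow \<le> a \<Longrightarrow> a < b \<Longrightarrow> \<beta> a < \<beta> b"
  unfolding \<beta>_def' using \<beta>0_strict[of a b] vlow0 by auto

lemma \<beta>_contI: "vlow \<le> a \<Longrightarrow> 0 < a \<Longrightarrow> continuous_on {a..b} \<beta>"
proof -
  assume a: "vlow \<le> a" "0 < a"
  have "continuous_on {a..b} \<beta>0"
    using a by (intro continuous_at_imp_continuous_on ballI \<beta>0_cont) auto
  moreover have "\<And>x. x \<in> {a..b} \<Longrightarrow> \<beta> x = \<beta>0 x" using a unfolding \<beta>_def' by auto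
  ultimately show ?thesis using continuous_on_cong by blast
qed

lemma \<beta>_IVT: "L < x \<Longrightarrow> x \<le> \<beta> t \<Longrightarrow> \<exists>w. vlow \<le> w \<and> \<beta> w = x"
proof -
  assume Lx: "L < x" and xt: "x \<le> \<beta> t"
  have tv: "vlow < t"
  proof (rule ccontr)
    assume "\<not> vlow < t"
    hence "\<beta> t \<le> \<beta> vlow" using \<beta>_mono by simp
    thus False using \<beta>_vlow Lx xt by simp
  qed
  define a where "a = (if 0 < vlow then vlow else min t x / 2)"
  have a: "vlow \<le> a \<and> 0 < a \<and> a \<le> t \<and> \<beta> a \<le> x"
  proof (cases "0 < vlow")
    case True thus ?thesis
      using \<beta>_vlow tv Lx by (auto simp: a_def)
  next
    case False
    hence v0: "vlow = 0" using vlow0 by simp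
    hence t0: "0 < t" "0 < x" using tv Lx L0 by auto
    hence ae: "a = min t x / 2" using False by (simp add: a_def)
    have a0: "0 \<le> a" using ae t0 by simp
    have "\<beta> a = \<beta>0 a" using a0 v0 unfolding \<beta>_def' by simp
    hence "\<beta> a \<le> a" using \<beta>0_le[OF a0] by simp
    moreover have "a \<le> t" "a < x" "0 < a" using ae t0 by auto
    ultimately show ?thesis using v0 by linarith
  qed
  obtain w where "a \<le> w" "w \<le> t" "\<beta> w = x"
    using IVT'[of \<beta> a x t] a xt \<beta>_contI[of a t] by auto
  thus ?thesis using a by (intro exI[of _ w]) auto
qed

lemma \<beta>_level_le: "vlow \<le> w \<Longrightarrow> {s. \<beta> s \<le> \<beta> w} = {..w}"
proof (intro set_eqI iffI)
  fix s assume w: "vlow \<le> w" and s: "s \<in> {s. \<beta> s \<le> \<beta> w}"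
  show "s \<in> {..w}"
  proof (rule ccontr)
    assume "s \<notin> {..w}"
    hence "w < s" by simp
    thus False using \<beta>_strict[OF w, of s] s by simp
  qed
next
  fix s assume "s \<in> {..w}"
  thus "s \<in> {s. \<beta> s \<le> \<beta> w}" using \<beta>_mono by simp
qed

lemma \<beta>_level_less: "vlow \<le> w \<Longrightarrow> L < \<beta> w \<Longrightarrow> {s. \<beta> s < \<beta> w} = {..<w}"
proof (intro set_eqI iffI)
  fix s assume w: "vlow \<le> w" "L < \<beta> w" and s: "s \<in> {s. \<beta> s < \<beta> w}"
  show "s \<in> {..<w}"
  proof (rule ccontr)
    assume "s \<notin> {..<w}"
    hence "w \<le> s" by simp
    thus False using \<beta>_mono[of w s] s by simp
  qed
next
  fix s assume w: "vlow \<le> w" "L < \<beta> w" and s: "s \<in> {..<w}"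
  show "s \<in> {s. \<beta> s < \<beta> w}"
  proof (cases "vlow \<le> s")
    case True thus ?thesis using \<beta>_strict s by auto
  next
    case False thus ?thesis using \<beta>_below[of s] w by auto
  qed
qed

lemma \<beta>_eq_A: "vlow \<le> w \<Longrightarrow> A w = \<beta> w * F w"
  using A_eq unfolding \<beta>_def' by simp

lemma EV_le: "(\<And>t. \<beta> t < c) \<Longrightarrow> integral\<^sup>L M (\<lambda>s. s) \<le> c"
proof -
  assume bc: "\<And>t. \<beta> t < c"
  have "((\<lambda>t. c * F t) \<longlongrightarrow> c * 1) at_top" by (intro tendsto_intros F_top)
  moreover have "\<forall>\<^sub>F t in at_top. A t \<le> c * F t"
    using eventually_ge_at_top[of vlow]
  proof eventually_elim
    case (elim t)
    thus ?case using \<beta>_eq_A[OF elim] bc[of t] F_nonneg[of t] by (simp add: mult_right_mono)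
  qed
  ultimately show ?thesis using tendsto_le[OF trivial_limit_at_top_linorder _ A_top] by simp
qed

lemma KI: "S \<in> sets borel \<Longrightarrow> integrable M (\<lambda>s. indicator S s * (v - s))"
proof -
  assume S: "S \<in> sets borel"
  have "integrable M (\<lambda>s. indicator S s * v - indicator S s * s)"
    using S by (intro Bochner_Integration.integrable_diff intC intI)
  thus ?thesis by (simp add: algebra_simps)
qed

lemma K_eq: "S \<in> sets borel \<Longrightarrow> (\<integral>s. indicator S s * (v - s) \<partial>M) = v * measure M S - (\<integral>s. indicator S s * s \<partial>M)"
proof -
  assume S: "S \<in> sets borel"
  have "(\<integral>s. indicator S s * (v - s) \<partial>M) = (\<integral>s. indicator S s * v - indicator S s * s \<partial>M)"
    by (simp add: algebra_simps)
  also have "\<dots> = v * measure M S - (\<integral>s. indicator S s * s \<partial>M)"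
    using S by (simp add: Bochner_Integration.integral_diff[OF intC intI] intCI)
  finally show ?thesis .
qed

lemma K_lt: "(\<integral>s. indicator {..<w} s * (v - s) \<partial>M) = v * F w - A w"
  using K_eq[of "{..<w}"] by (simp add: F_def A_def)

lemma K_UNIV: "(\<integral>s. indicator UNIV s * (v - s) \<partial>M) = v - integral\<^sup>L M (\<lambda>s. s)"
proof -
  have m1: "measure M UNIV = 1" using prob_space space_M by simp
  show ?thesis using K_eq[of UNIV v] by (simp add: m1)
qed

lemma K_mono: "S \<in> sets borel \<Longrightarrow> {..<vlow} \<subseteq> S \<Longrightarrow>
   (\<integral>s. indicator S s * (v - s) \<partial>M) \<le> (\<integral>s. indicator {..<max v vlow} s * (v - s) \<partial>M)"
  by (intro integral_mono KI) (auto simp: indicator_def subset_iff less_max_iff_disj not_less)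

lemma RHS_ge: "0 \<le> v \<Longrightarrow>
   (\<integral>s. indicator {..<max v vlow} s * (v - s) \<partial>M) \<le> (if L \<le> \<beta> v then (v - \<beta> v) * measure M {s. \<beta> s \<le> \<beta> v} else 0)
   \<and> 0 \<le> (if L \<le> \<beta> v then (v - \<beta> v) * measure M {s. \<beta> s \<le> \<beta> v} else 0)"
proof -
  assume v0: "0 \<le> v"
  show ?thesis
  proof (cases "vlow \<le> v")
    case True
    hence eq: "(if L \<le> \<beta> v then (v - \<beta> v) * measure M {s. \<beta> s \<le> \<beta> v} else 0) = v * F v - A v"
      using \<beta>_ge[OF True] \<beta>_level_le[OF True] \<beta>_eq_A[OF True] by (simp add: F_le[symmetric] algebra_simps)
    have "0 \<le> (\<integral>s. indicator {..<v} s * (v - s) \<partial>M)"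
      by (intro integral_nonneg_AE AE_I2) (auto simp: indicator_def)
    thus ?thesis using eq K_lt[of v v] True by simp
  next
    case False
    hence m: "max v vlow = vlow" by simp
    have K: "(\<integral>s. indicator {..<vlow} s * (v - s) \<partial>M) = (v - L) * F vlow"
      using K_lt[where v=v and w=vlow] \<beta>_eq_A[of vlow] \<beta>_vlow by (simp add: algebra_simps)
    show ?thesis
    proof (cases "L < v")
      case True
      hence "\<beta> v = L" using False unfolding \<beta>_def' by simp
      thus ?thesis using K m True \<beta>_level_le[of vlow] \<beta>_vlow F_le[of vlow] F_nonneg[of vlow] by simp
    next
      case c2: False
      hence "L \<noteq> 0" using L0_vlow False v0 by auto
      hence "0 < L" using L0 by simp
      moreover have "\<beta> v = 0" using False c2 unfolding \<beta>_def' by simp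
      moreover have "(v - L) * F vlow \<le> 0" using c2 F_nonneg[of vlow] by (simp add: mult_nonpos_nonneg)
      ultimately show ?thesis using K m by simp
    qed
  qed
qed

lemma LHS_le: "L \<le> x \<Longrightarrow> \<exists>S. S \<in> sets borel \<and> {..<vlow} \<subseteq> S \<and>
   (v - x) * measure M {s. \<beta> s \<le> x} \<le> (\<integral>s. indicator S s * (v - s) \<partial>M)"
proof -
  assume Lx: "L \<le> x"
  show ?thesis
  proof (cases "\<exists>t. x \<le> \<beta> t")
    case True
    obtain w where w: "vlow \<le> w" "\<beta> w = x"
    proof (cases "L = x")
      case True thus ?thesis using that[of vlow] \<beta>_vlow by simp
    next
      case False thus ?thesis using that \<beta>_IVT[of x] Lx \<open>\<exists>t. x \<le> \<beta> t\<close> by force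
    qed
    have "(v - x) * measure M {s. \<beta> s \<le> x} = v * F w - A w"
      using \<beta>_level_le[OF w(1)] w \<beta>_eq_A[OF w(1)] by (simp add: F_le[symmetric] algebra_simps)
    thus ?thesis using K_lt[where v=v and w=w] w by (intro exI[of _ "{..<w}"]) auto
  next
    case False
    hence all: "\<And>t. \<beta> t < x" by (simp add: not_le)
    hence "{s. \<beta> s \<le> x} = UNIV" by (auto intro: less_imp_le)
    hence "(v - x) * measure M {s. \<beta> s \<le> x} = v - x" by (simp add: space_M[symmetric] prob_space)
    moreover have "v - x \<le> v - integral\<^sup>L M (\<lambda>s. s)" using EV_le[OF all] by simp
    ultimately show ?thesis using K_UNIV[of v] by (intro exI[of _ UNIV]) auto
  qed
qed

lemma P2_ineq: "0 \<le> v \<Longrightarrow>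
  (if L \<le> x then (v - x) * measure M {s. \<beta> s \<le> x} else 0)
   \<le> (if L \<le> \<beta> v then (v - \<beta> v) * measure M {s. \<beta> s \<le> \<beta> v} else 0)"
proof -
  assume v0: "0 \<le> v"
  note R = RHS_ge[OF v0]
  show ?thesis
  proof (cases "L \<le> x")
    case True
    then obtain S where S: "S \<in> sets borel" "{..<vlow} \<subseteq> S"
      "(v - x) * measure M {s. \<beta> s \<le> x} \<le> (\<integral>s. indicator S s * (v - s) \<partial>M)"
      using LHS_le by blast
    thus ?thesis using K_mono[OF S(1,2), of v] R True by simp
  qed (use R in simp)
qed

lemma lvl_less: "{s. \<beta> s < c} \<in> sets borel"
proof -
  have eq: "{s. \<beta> s < c} = \<beta> -` {..<c} \<inter> space borel" by auto
  show ?thesis unfolding eq by (rule measurable_sets[OF \<beta>_meas]) simp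
qed

lemma lvl_le: "{s. \<beta> s \<le> c} \<in> sets borel"
proof -
  have eq: "{s. \<beta> s \<le> c} = \<beta> -` {..c} \<inter> space borel" by auto
  show ?thesis unfolding eq by (rule measurable_sets[OF \<beta>_meas]) simp
qed

definition J where "J c = (\<integral>s. indicator {s. \<beta> s < c} s * (s - c) \<partial>M)"

lemma J_prop: "L < c \<Longrightarrow> J c \<le> 0 \<and> ((\<exists>t. c \<le> \<beta> t) \<longrightarrow> J c = 0)"
proof -
  assume Lc: "L < c"
  have Jneg: "J c = - (\<integral>s. indicator {s. \<beta> s < c} s * (c - s) \<partial>M)"
  proof -
    have e: "(\<lambda>s. indicator {s. \<beta> s < c} s * (s - c)) = (\<lambda>s. - (indicator {s. \<beta> s < c} s * (c - s)))"
      by (rule ext) (simp only: right_diff_distrib minus_diff_eq)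
    show ?thesis unfolding J_def e by (rule Bochner_Integration.integral_minus)
  qed
  show ?thesis
  proof (cases "\<exists>t. c \<le> \<beta> t")
    case True
    then obtain w where w: "vlow \<le> w" "\<beta> w = c" using \<beta>_IVT Lc by blast
    have "J c = - (c * F w - A w)"
      using Jneg \<beta>_level_less[OF w(1)] w Lc K_lt[where v=c and w=w] by simp
    thus ?thesis using \<beta>_eq_A[OF w(1)] w by simp
  next
    case False
    hence all: "\<And>t. \<beta> t < c" by (simp add: not_le)
    hence "{s. \<beta> s < c} = UNIV" by auto
    hence "J c = - (c - integral\<^sup>L M (\<lambda>s. s))" using Jneg K_UNIV[of c] by simp
    thus ?thesis using EV_le[OF all] False by simp
  qed
qed

lemma J_int: "integrable M (\<lambda>s. indicator {s. \<beta> s < c} s * (s - c))"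
proof -
  have "integrable M (\<lambda>s. indicator {s. \<beta> s < c} s * (c - s))" by (rule KI[OF lvl_less])
  hence "integrable M (\<lambda>s. - (indicator {s. \<beta> s < c} s * (c - s)))"
    by (rule Bochner_Integration.integrable_minus)
  moreover have "(\<lambda>s. indicator {s. \<beta> s < c} s * (s - c)) = (\<lambda>s. - (indicator {s. \<beta> s < c} s * (c - s)))"
    by (rule ext) (simp only: right_diff_distrib minus_diff_eq)
  ultimately show ?thesis by simp
qed

end



lemma comp_meas:
  assumes "\<forall>j\<in>I. sets (\<rho> j) = sets borel" "j \<in> I"
  shows "(\<lambda>b. b j) \<in> borel_measurable (PiM I \<rho>)"
proof -
  have "(\<lambda>b. b j) \<in> measurable (PiM I \<rho>) (\<rho> j)" by (rule measurable_component_singleton) fact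
  thus ?thesis using measurable_cong_sets[OF refl, of "\<rho> j" borel "PiM I \<rho>"] assms by simp
qed

lemma Max_meas:
  assumes "finite I" "\<forall>j\<in>I. sets (\<rho> j) = sets borel"
  shows "(\<lambda>b. Max (b ` I) :: real) \<in> borel_measurable (PiM I \<rho>)"
proof -
  have "(\<lambda>x. Max ((\<lambda>j. x j) ` I) :: real) \<in> borel_measurable (PiM I \<rho>)"
    by (rule borel_measurable_Max[OF assms(1)]) (rule comp_meas[OF assms(2)], assumption)
  thus ?thesis by simp
qed

lemma card_sum: "finite I \<Longrightarrow> real (card {j\<in>I. b j = c}) = (\<Sum>j\<in>I. if b j = c then 1 else 0)"
proof -
  assume "finite I"
  have "real (card {j\<in>I. b j = c}) = (\<Sum>j\<in>{j\<in>I. b j = c}. 1)" by simp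
  also have "\<dots> = (\<Sum>j\<in>I. if b j = c then 1 else 0)" using \<open>finite I\<close> by (rule sum.inter_filter)
  finally show ?thesis by simp
qed

lemma bs_prob: "(\<forall>j\<in>I. bid_strategy (\<rho> j)) \<Longrightarrow> prob_space (PiM I \<rho>)"
  by (intro prob_space_PiM) (auto simp: bid_strategy_def)

lemma bs_sets: "(\<forall>j\<in>I. bid_strategy (\<rho> j)) \<Longrightarrow> \<forall>j\<in>I. sets (\<rho> j) = sets borel"
  by (auto simp: bid_strategy_def)

locale game = vsetting M L vlow for M L vlow +
  fixes I :: "nat set" and \<sigma> :: "nat \<Rightarrow> real measure"
  assumes I_fin: "finite I" and I_ne: "I \<noteq> {}"
  and \<sigma>_bs: "\<forall>i\<in>I. bid_strategy (\<sigma> i)"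
  and dist: "distr (PiM I \<sigma>) borel (\<lambda>b. Max (b ` I)) = distr M borel \<beta>"
begin

lemma p1_meas:
  assumes bs: "\<forall>j\<in>I. bid_strategy (\<rho> j)" and i: "i \<in> I"
  shows "(\<lambda>(b, v). p1_payoff I L \<beta> i b v) \<in> borel_measurable (PiM I \<rho> \<Otimes>\<^sub>M M)"
proof -
  let ?N = "PiM I \<rho> \<Otimes>\<^sub>M M"
  have X: "(\<lambda>p. fst p j) \<in> borel_measurable ?N" if "j \<in> I" for j
    by (rule measurable_compose[OF measurable_fst comp_meas[OF bs_sets[OF bs] that]])
  have Xi: "(\<lambda>p. fst p i) \<in> borel_measurable ?N" using X i by blast
  have V: "(\<lambda>p. snd p) \<in> borel_measurable ?N"
  proof -
    have "snd \<in> measurable ?N M" by (rule measurable_snd)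
    thus ?thesis unfolding measurable_cong_sets[OF refl sets_M] by simp
  qed
  have BV: "(\<lambda>p. \<beta> (snd p)) \<in> borel_measurable ?N"
    by (rule measurable_compose[OF V \<beta>_meas])
  have S: "(\<lambda>p. \<Sum>j\<in>I. if fst p j = fst p i then 1 else 0 :: real) \<in> borel_measurable ?N"
  proof (rule borel_measurable_sum)
    fix j assume "j \<in> I"
    show "(\<lambda>p. if fst p j = fst p i then 1 else 0 :: real) \<in> borel_measurable ?N"
      by (rule measurable_If[OF measurable_const measurable_const borel_measurable_eq[OF X[OF \<open>j \<in> I\<close>] Xi]]) auto
  qed
  have P: "{p \<in> space ?N. L < fst p i \<and> \<beta> (snd p) < fst p i \<and> (\<forall>j\<in>I. fst p j \<le> fst p i)} \<in> sets ?N"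
  proof -
    have P1: "{p \<in> space ?N. L < fst p i} \<in> sets ?N" by (rule borel_measurable_less[OF measurable_const Xi]) auto
    have P2: "{p \<in> space ?N. \<beta> (snd p) < fst p i} \<in> sets ?N" by (rule borel_measurable_less[OF BV Xi])
    have P3: "{p \<in> space ?N. \<forall>j\<in>I. fst p j \<le> fst p i} \<in> sets ?N"
      by (rule sets.sets_Collect_finite_All[OF borel_measurable_le[OF X Xi] I_fin])
    have eqP: "{p \<in> space ?N. L < fst p i \<and> \<beta> (snd p) < fst p i \<and> (\<forall>j\<in>I. fst p j \<le> fst p i)}
      = {p \<in> space ?N. L < fst p i} \<inter> ({p \<in> space ?N. \<beta> (snd p) < fst p i} \<inter> {p \<in> space ?N. \<forall>j\<in>I. fst p j \<le> fst p i})"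
      by blast
    show ?thesis unfolding eqP by (intro sets.Int P1 P2 P3)
  qed
  have G: "(\<lambda>p. (snd p - fst p i) / (\<Sum>j\<in>I. if fst p j = fst p i then 1 else 0 :: real)) \<in> borel_measurable ?N"
    by (rule borel_measurable_divide[OF borel_measurable_diff[OF V Xi] S])
  have eq: "(\<lambda>(b, v). p1_payoff I L \<beta> i b v) = (\<lambda>p. if L < fst p i \<and> \<beta> (snd p) < fst p i \<and> (\<forall>j\<in>I. fst p j \<le> fst p i)
      then (snd p - fst p i) / (\<Sum>j\<in>I. if fst p j = fst p i then 1 else 0) else 0)"
    by (auto simp: p1_payoff_def card_sum[OF I_fin] fun_eq_iff)
  show ?thesis unfolding eq by (rule measurable_If[OF G measurable_const P]) auto
qed

lemma pairP: "\<forall>j\<in>I. bid_strategy (\<rho> j) \<Longrightarrow> pair_sigma_finite (PiM I \<rho>) M"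
  unfolding pair_sigma_finite_def
  using prob_space_imp_sigma_finite[OF bs_prob] prob_space_imp_sigma_finite[OF prob_space_axioms] by blast

lemma inner: "(\<integral>v. p1_payoff I L \<beta> i b v \<partial>M) =
   (if L < b i \<and> (\<forall>j\<in>I. b j \<le> b i) then J (b i) / real (card {j\<in>I. b j = b i}) else 0)"
proof (cases "L < b i \<and> (\<forall>j\<in>I. b j \<le> b i)")
  case True
  have "(\<lambda>v. p1_payoff I L \<beta> i b v) = (\<lambda>v. indicator {s. \<beta> s < b i} v * (v - b i) / real (card {j\<in>I. b j = b i}))"
    using True by (auto simp: p1_payoff_def fun_eq_iff indicator_def)
  thus ?thesis using True by (simp add: J_def)
next
  case False
  hence "(\<lambda>v. p1_payoff I L \<beta> i b v) = (\<lambda>v. 0)" by (auto simp: p1_payoff_def fun_eq_iff)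
  hence a: "(\<integral>v. p1_payoff I L \<beta> i b v \<partial>M) = 0" by simp
  have b: "(if L < b i \<and> (\<forall>j\<in>I. b j \<le> b i) then J (b i) / real (card {j\<in>I. b j = b i}) else 0) = 0"
    by (rule if_not_P[OF False])
  show ?thesis by (simp only: a b)
qed

lemma inner_nonpos: "(\<integral>v. p1_payoff I L \<beta> i b v \<partial>M) \<le> 0"
  unfolding inner using J_prop by (auto intro: divide_nonpos_nonneg)

lemma inner_zero: "i \<in> I \<Longrightarrow> Max (b ` I) \<le> \<beta> t \<Longrightarrow> (\<integral>v. p1_payoff I L \<beta> i b v \<partial>M) = 0"
proof -
  assume i: "i \<in> I" and t: "Max (b ` I) \<le> \<beta> t"
  have "b i \<le> Max (b ` I)" using i I_fin by simp
  hence bt: "b i \<le> \<beta> t" using t by linarith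
  have "L < b i \<Longrightarrow> J (b i) = 0" using J_prop[of "b i"] bt by blast
  thus ?thesis unfolding inner by auto
qed

lemma dev:
  assumes bs: "\<forall>j\<in>I. bid_strategy (\<rho> j)"
    and int: "integrable (PiM I \<rho> \<Otimes>\<^sub>M M) (\<lambda>(b, v). p1_payoff I L \<beta> i b v)"
  shows "integral\<^sup>L (PiM I \<rho> \<Otimes>\<^sub>M M) (\<lambda>(b, v). p1_payoff I L \<beta> i b v) \<le> 0"
proof -
  interpret P: pair_sigma_finite "PiM I \<rho>" M using pairP[OF bs] .
  have "integral\<^sup>L (PiM I \<rho> \<Otimes>\<^sub>M M) (\<lambda>(b, v). p1_payoff I L \<beta> i b v)
      = (\<integral>b. (\<integral>v. p1_payoff I L \<beta> i b v \<partial>M) \<partial>PiM I \<rho>)"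
    using P.integral_fst'[OF int] by simp
  also have "\<dots> \<le> 0"
  proof -
    have "0 \<le> (\<integral>b. - (\<integral>v. p1_payoff I L \<beta> i b v \<partial>M) \<partial>PiM I \<rho>)"
      by (intro integral_nonneg_AE AE_I2) (simp add: inner_nonpos)
    thus ?thesis by (simp only: Bochner_Integration.integral_minus neg_0_le_iff_le)
  qed
  finally show ?thesis .
qed

lemma Max_meas_\<sigma>: "(\<lambda>b. Max (b ` I) :: real) \<in> borel_measurable (PiM I \<sigma>)"
  by (rule Max_meas[OF I_fin bs_sets[OF \<sigma>_bs]])

lemma \<beta>_measM: "\<beta> \<in> borel_measurable M" by (rule meas_M[OF \<beta>_meas])

lemma p2_int: "(\<integral>b. p2_payoff I L x b v \<partial>PiM I \<sigma>) = (if L \<le> x then (v - x) * measure M {s. \<beta> s \<le> x} else 0)"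
proof -
  have eq: "(\<lambda>b. p2_payoff I L x b v) = (\<lambda>b. (if L \<le> x then v - x else 0) * indicator {b. Max (b ` I) \<le> x} b)"
    using I_fin I_ne by (auto simp: p2_payoff_def fun_eq_iff indicator_def)
  have "measure (PiM I \<sigma>) ({b. Max (b ` I) \<le> x} \<inter> space (PiM I \<sigma>))
      = measure (distr (PiM I \<sigma>) borel (\<lambda>b. Max (b ` I))) {..x}"
    by (subst measure_distr[OF Max_meas_\<sigma>]) (auto intro!: arg_cong[where f="measure _"])
  also have "\<dots> = measure (distr M borel \<beta>) {..x}" by (simp only: dist)
  also have "\<dots> = measure M {s. \<beta> s \<le> x}"
    by (subst measure_distr[OF \<beta>_measM]) (auto simp: space_M intro!: arg_cong[where f="measure _"])
  finally have m: "measure (PiM I \<sigma>) ({b. Max (b ` I) \<le> x} \<inter> space (PiM I \<sigma>)) = measure M {s. \<beta> s \<le> x}" .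
  show ?thesis unfolding eq using m by simp
qed

lemma AE_bound: "AE b in PiM I \<sigma>. \<exists>n::nat. Max (b ` I) \<le> \<beta> (real n)"
proof -
  have Q: "{y \<in> space borel. \<exists>n::nat. y \<le> \<beta> (real n)} \<in> sets borel"
  proof -
    have "{y \<in> space borel. \<exists>n::nat. y \<le> \<beta> (real n)} = (\<Union>n\<in>UNIV. {..\<beta> (real n)})" by auto
    moreover have "(\<Union>n\<in>(UNIV::nat set). {..\<beta> (real n)}) \<in> sets borel" by (intro sets.countable_UN) auto
    ultimately show ?thesis by simp
  qed
  have "AE s in M. \<exists>n::nat. \<beta> s \<le> \<beta> (real n)"
  proof (intro AE_I2 exI)
    fix s show "\<beta> s \<le> \<beta> (real (nat \<lceil>s\<rceil>))" by (rule \<beta>_mono[OF real_nat_ceiling_ge])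
  qed
  hence "AE y in distr M borel \<beta>. \<exists>n::nat. y \<le> \<beta> (real n)"
    using AE_distr_iff[OF \<beta>_measM Q] by simp
  hence "AE y in distr (PiM I \<sigma>) borel (\<lambda>b. Max (b ` I)). \<exists>n::nat. y \<le> \<beta> (real n)"
    by (simp only: dist)
  thus ?thesis using AE_distr_iff[OF Max_meas_\<sigma> Q] by simp
qed

lemma int_Max: "integrable (PiM I \<sigma>) (\<lambda>b. Max (b ` I))"
proof -
  have "integrable M \<beta>"
    using \<beta>_nonneg \<beta>_le_abs by (intro Bochner_Integration.integrable_bound[OF intM \<beta>_measM] AE_I2) auto
  hence "integrable (distr M borel \<beta>) (\<lambda>y. y)"
    using integrable_distr_eq[OF \<beta>_measM, of "\<lambda>y. y"] by simp
  hence "integrable (distr (PiM I \<sigma>) borel (\<lambda>b. Max (b ` I))) (\<lambda>y. y)" by (simp only: dist)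
  thus ?thesis using integrable_distr_eq[OF Max_meas_\<sigma>, of "\<lambda>y. y"] by simp
qed

lemma snd_meas: "(\<lambda>p. snd p) \<in> borel_measurable (N \<Otimes>\<^sub>M M)"
proof -
  have "snd \<in> measurable (N \<Otimes>\<^sub>M M) M" by (rule measurable_snd)
  thus ?thesis unfolding measurable_cong_sets[OF refl sets_M] by simp
qed

lemma p1_bound:
  assumes i: "i \<in> I"
  shows "\<bar>p1_payoff I L \<beta> i b v\<bar> \<le> \<bar>v\<bar> + \<bar>Max (b ` I)\<bar>"
proof (cases "L < b i \<and> \<beta> v < b i \<and> (\<forall>j\<in>I. b j \<le> b i)")
  case True
  let ?k = "real (card {j\<in>I. b j = b i})"
  have "card {j\<in>I. b j = b i} \<noteq> 0" using i I_fin by (auto simp: card_eq_0_iff)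
  hence k: "1 \<le> ?k" by linarith
  have "\<bar>(v - b i) / ?k\<bar> \<le> \<bar>v - b i\<bar>"
    using k by (simp add: abs_divide divide_le_eq mult_le_cancel_left1 abs_mult)
  also have "\<dots> \<le> \<bar>v\<bar> + \<bar>b i\<bar>" by (rule abs_triangle_ineq4)
  also have "\<bar>b i\<bar> \<le> \<bar>Max (b ` I)\<bar>"
  proof -
    have "b i \<le> Max (b ` I)" using i I_fin by simp
    thus ?thesis using True L0 by linarith
  qed
  finally show ?thesis using True by (simp add: p1_payoff_def)
next
  case False
  have "p1_payoff I L \<beta> i b v = 0" unfolding p1_payoff_def by (rule if_not_P[OF False])
  thus ?thesis by simp
qed

lemma eq_int:
  assumes i: "i \<in> I"
  shows "integrable (PiM I \<sigma> \<Otimes>\<^sub>M M) (\<lambda>(b, v). p1_payoff I L \<beta> i b v)"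
proof -
  interpret P: pair_sigma_finite "PiM I \<sigma>" M using pairP[OF \<sigma>_bs] .
  interpret Pi: prob_space "PiM I \<sigma>" by (rule bs_prob[OF \<sigma>_bs])
  let ?N = "PiM I \<sigma> \<Otimes>\<^sub>M M"
  have h1: "integrable ?N (\<lambda>p. Max (fst p ` I))"
  proof -
    have "integrable (distr ?N (PiM I \<sigma>) fst) (\<lambda>b. Max (b ` I))"
      unfolding distr_pair_fst by (rule int_Max)
    thus ?thesis using integrable_distr_eq[OF measurable_fst[of "PiM I \<sigma>" M] Max_meas_\<sigma>] by simp
  qed
  have h2: "integrable ?N (\<lambda>p. snd p)"
  proof (rule P.Fubini_integrable)
    show "(\<lambda>p. snd p) \<in> borel_measurable ?N" by (rule snd_meas)
    show "integrable (PiM I \<sigma>) (\<lambda>x. \<integral>y. norm (snd (x, y)) \<partial>M)" by simp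
    show "AE x in PiM I \<sigma>. integrable M (\<lambda>y. snd (x, y))" using intM by simp
  qed
  have h: "integrable ?N (\<lambda>p. \<bar>snd p\<bar> + \<bar>Max (fst p ` I)\<bar>)"
    using h1 h2 by (intro Bochner_Integration.integrable_add integrable_abs)
  show ?thesis
  proof (rule Bochner_Integration.integrable_bound[OF h p1_meas[OF \<sigma>_bs i]])
    show "AE x in ?N. norm ((\<lambda>(b, v). p1_payoff I L \<beta> i b v) x) \<le> norm (\<bar>snd x\<bar> + \<bar>Max (fst x ` I)\<bar>)"
      using p1_bound[OF i] by (intro AE_I2) (auto simp: split_beta)
  qed
qed

lemma eq_val:
  assumes i: "i \<in> I"
  shows "integral\<^sup>L (PiM I \<sigma> \<Otimes>\<^sub>M M) (\<lambda>(b, v). p1_payoff I L \<beta> i b v) = 0"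
proof -
  interpret P: pair_sigma_finite "PiM I \<sigma>" M using pairP[OF \<sigma>_bs] .
  have "integral\<^sup>L (PiM I \<sigma> \<Otimes>\<^sub>M M) (\<lambda>(b, v). p1_payoff I L \<beta> i b v)
      = (\<integral>b. (\<integral>v. p1_payoff I L \<beta> i b v \<partial>M) \<partial>PiM I \<sigma>)"
    using P.integral_fst'[OF eq_int[OF i]] by simp
  also have "\<dots> = 0"
  proof (rule integral_eq_zero_AE)
    show "AE b in PiM I \<sigma>. (\<integral>v. p1_payoff I L \<beta> i b v \<partial>M) = 0"
      using AE_bound
    proof eventually_elim
      case (elim b)
      then obtain n :: nat where "Max (b ` I) \<le> \<beta> (real n)" by blast
      thus ?case by (rule inner_zero[OF i])
    qed
  qed
  finally show ?thesis .
qed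

end



theorem corollary1:
  fixes f :: "real \<Rightarrow> real" and L vlow :: real and n :: nat
    and \<sigma> :: "nat \<Rightarrow> real measure"
  assumes "f \<in> borel_measurable borel"
    and "\<forall>x. 0 \<le> f x"
    and "prob_space (vdist f)"
    and "measure_support (vdist f) = {0..}"
    and "integrable (vdist f) (\<lambda>x. x)"
    and "0 \<le> L"
    and "L < (\<integral>x. x \<partial>vdist f)"
    and "vlow \<in> measure_support (vdist f)"
    and "L = cond_exp_below (vdist f) vlow"
    and "2 \<le> n"
    and "\<forall>i\<in>{0..<n-1}. bid_strategy (\<sigma> i)"
    and "distr (PiM {0..<n-1} \<sigma>) borel (\<lambda>b. Max (b ` {0..<n-1}))
           = distr (vdist f) borel (beta_L (vdist f) L vlow)"
  shows "is_equilibrium (vdist f) L n \<sigma> (beta_L (vdist f) L vlow)"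
proof -
  note fm[measurable] = assms(1)
  let ?M = "vdist f"
  interpret P: prob_space ?M by (rule assms(3))
  have setsM: "sets ?M = sets borel" unfolding vdist_def by simp
  have noatom: "measure ?M {x} = 0" for x
  proof -
    have "emeasure ?M {x} = (\<integral>\<^sup>+ y. ennreal (f y) * indicator {x} y \<partial>lborel)"
      unfolding vdist_def by (rule emeasure_density) auto
    also have "\<dots> = 0"
    proof (subst nn_integral_0_iff_AE)
      show "(\<lambda>y. ennreal (f y) * indicator {x} y) \<in> borel_measurable lborel" by measurable
      show "AE y in lborel. ennreal (f y) * indicator {x} y = 0"
        using AE_lborel_singleton[of x] by eventually_elim auto
    qed
    finally show ?thesis by (simp add: measure_def)
  qed
  have supp: "\<And>x. x \<in> measure_support ?M \<longleftrightarrow> 0 \<le> x" using assms(4) by auto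
  have pos: "0 < measure ?M {a<..<b}" if "0 \<le> a" "a < b" for a b
  proof -
    define m where "m = (a + b) / 2"
    have "m \<in> measure_support ?M" using supp that by (simp add: m_def)
    hence "0 < emeasure ?M (ball m ((b - a) / 2))" using that unfolding measure_support_def by simp
    moreover have "ball m ((b - a) / 2) = {a<..<b}" by (simp add: ball_eq_greaterThanLessThan m_def field_simps)
    ultimately show ?thesis by (simp add: P.emeasure_eq_measure)
  qed
  have neg0: "measure ?M {..<0} = 0"
  proof -
    define FF where "FF = {ball x e | x e. 0 < e \<and> emeasure ?M (ball x e) = 0}"
    obtain FF' where FF': "FF' \<subseteq> FF" "countable FF'" "\<Union>FF' = \<Union>FF"
      using Lindelof[of FF] by (auto simp: FF_def)
    have null: "\<Union>FF' \<in> null_sets ?M"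
    proof -
      have "(\<Union>S\<in>FF'. S) \<in> null_sets ?M"
      proof (rule null_sets_UN'[OF FF'(2)])
        fix S assume "S \<in> FF'"
        hence "S \<in> FF" using FF' by auto
        then obtain x e where "S = ball x e" "emeasure ?M (ball x e) = 0" by (auto simp: FF_def)
        moreover have "ball x e \<in> sets ?M" using setsM by simp
        ultimately show "S \<in> null_sets ?M" by (simp add: null_sets_def)
      qed
      thus ?thesis by simp
    qed
    have "{..<0} \<subseteq> \<Union>FF"
    proof
      fix x :: real assume "x \<in> {..<0}"
      hence "x \<notin> measure_support ?M" using supp by simp
      then obtain e where "0 < e" "\<not> 0 < emeasure ?M (ball x e)" unfolding measure_support_def by auto
      hence "ball x e \<in> FF" by (auto simp: FF_def)
      moreover have "x \<in> ball x e" using \<open>0 < e\<close> by simp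
      ultimately show "x \<in> \<Union>FF" by blast
    qed
    hence "{..<0} \<in> null_sets ?M"
      using null_sets_subset[OF null] FF'(3) setsM by auto
    thus ?thesis by (simp add: measure_def null_sets_def)
  qed
  have vlow0: "0 \<le> vlow" using assms(8) supp by simp
  interpret V: vsetting ?M L vlow
    by unfold_locales (use setsM noatom neg0 pos assms(5,6,9) vlow0 in auto)
  let ?I = "{0..<n-1}"
  interpret G: game ?M L vlow ?I \<sigma>
    by unfold_locales (use assms(10,11,12) in auto)
  show ?thesis
    unfolding is_equilibrium_def Let_def
  proof (intro conjI ballI allI impI)
    show "\<And>i. i \<in> ?I \<Longrightarrow> bid_strategy (\<sigma> i)" using assms(11) by auto
    show "beta_L ?M L vlow \<in> borel_measurable borel" by (rule V.\<beta>_meas)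
    show "\<And>v. 0 \<le> beta_L ?M L vlow v" by (rule V.\<beta>_nonneg)
    show "integral\<^sup>L (PiM ?I \<sigma>) (\<lambda>b. p2_payoff ?I L x b v)
        \<le> integral\<^sup>L (PiM ?I \<sigma>) (\<lambda>b. p2_payoff ?I L (beta_L ?M L vlow v) b v)"
      if "v \<in> measure_support ?M" "0 \<le> x" for v x
      unfolding G.p2_int using V.P2_ineq[of v x] that supp by simp
    show "integrable (PiM ?I \<sigma> \<Otimes>\<^sub>M ?M) (\<lambda>(b, v). p1_payoff ?I L (beta_L ?M L vlow) i b v)"
      if "i \<in> ?I" for i using G.eq_int[OF that] .
    show "integral\<^sup>L (PiM ?I (\<sigma>(i := \<tau>)) \<Otimes>\<^sub>M ?M) (\<lambda>(b, v). p1_payoff ?I L (beta_L ?M L vlow) i b v)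
        \<le> integral\<^sup>L (PiM ?I \<sigma> \<Otimes>\<^sub>M ?M) (\<lambda>(b, v). p1_payoff ?I L (beta_L ?M L vlow) i b v)"
      if "i \<in> ?I" "bid_strategy \<tau>"
        "integrable (PiM ?I (\<sigma>(i := \<tau>)) \<Otimes>\<^sub>M ?M) (\<lambda>(b, v). p1_payoff ?I L (beta_L ?M L vlow) i b v)"
      for i \<tau>
    proof -
      have bs: "\<forall>j\<in>?I. bid_strategy ((\<sigma>(i := \<tau>)) j)" using that(2) assms(11) by auto
      show ?thesis using G.dev[OF bs that(3)] G.eq_val[OF that(1)] by simp
    qed
  qed
qed


end
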